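(* Let $\mathcal S=\{1,\dots,N\}$ with $N>1$, let $d\ge1$, and let $v_1,\dots,v_N\in\mathbb R^d$, not all zero, with $d=\dim(\operatorname{span}\{v_1,\dots,v_N\})$. For $i\ne j$ let $a_{ij}:\mathbb R^d\to[0,\infty)$ be continuous. Let $(X,L)$ be the Harris irreducible continuous-time Markov process on $\mathcal S\times\mathbb R^d$ with generator \[Af(j,l)=v_j\cdot\nabla_l f(j,l)+\sum_{i\neq j}a_{ji}(l)\,[f(i,l)-f(j,l)].\] Let $p_1,\dots,p_N>0$ with $\sum_jp_j=1$ and let $g:\mathbb R^d\to[0,\infty)$ be differentiable with $\int_{\mathbb R^d}g=1$. If the probability measure $p_j\,g(l)\,dj\,dl$ is invariant for $(X,L)$, then $\sum_{j\in\mathcal S}p_jv_j=0$.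
   Context: The process: $L(t)=L(0)+\sum_j v_j\,\mu(\{s\in[0,t]:X(s)=j\})$ with $\mu$ Lebesgue measure, and $X$ jumps from $i$ to $j$ at rate $a_{ij}(L(t))$. Harris irreducibility: there exist an open $U\subset\mathbb R^d$ and $j_0\in\mathcal S$ such that from every starting point, $P((X(t),L(t))\in\{j_0\}\times U)>0$ for some $t>0$. *)

theory Defs
  imports "HOL-Probability.Probability"
begin

definition test_fun :: "nat \<Rightarrow> (nat \<Rightarrow> 'a::euclidean_space \<Rightarrow> real) \<Rightarrow> bool" where
  "test_fun N f \<longleftrightarrow>
     (\<forall>j\<in>{1..N}. (\<forall>l. f j differentiable (at l))
        \<and> (\<forall>b\<in>Basis. continuous_on UNIV (\<lambda>l. frechet_derivative (f j) (at l) b))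
        \<and> (\<exists>K. compact K \<and> (\<forall>l. l \<notin> K \<longrightarrow> f j l = 0)))"

definition gen :: "nat \<Rightarrow> (nat \<Rightarrow> 'a::euclidean_space) \<Rightarrow> (nat \<Rightarrow> nat \<Rightarrow> 'a \<Rightarrow> real)
                   \<Rightarrow> (nat \<Rightarrow> 'a \<Rightarrow> real) \<Rightarrow> nat \<Rightarrow> 'a \<Rightarrow> real" where
  "gen N v a f j l =
     frechet_derivative (f j) (at l) (v j)
     + (\<Sum>i\<in>{1..N} - {j}. a j i l * (f i l - f j l))"

definition pdmp_solution ::
  "nat \<Rightarrow> (nat \<Rightarrow> 'a::euclidean_space) \<Rightarrow> (nat \<Rightarrow> nat \<Rightarrow> 'a \<Rightarrow> real)
   \<Rightarrow> 'w measure \<Rightarrow> (real \<Rightarrow> 'w measure) \<Rightarrow> (real \<Rightarrow> 'w \<Rightarrow> nat) \<Rightarrow> (real \<Rightarrow> 'w \<Rightarrow> 'a) \<Rightarrow> bool"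
where
  "pdmp_solution N v a M F X L \<longleftrightarrow>
     prob_space M
   \<and> (\<forall>t\<ge>0. subalgebra M (F t))
   \<and> (\<forall>s t. 0 \<le> s \<and> s \<le> t \<longrightarrow> sets (F s) \<subseteq> sets (F t))
   \<and> (\<forall>t\<ge>0. X t \<in> measurable (F t) (count_space UNIV) \<and> L t \<in> borel_measurable (F t))
   \<and> (\<forall>\<omega>\<in>space M. \<forall>t\<ge>0. X t \<omega> \<in> {1..N})
   \<and> (\<forall>\<omega>\<in>space M. \<forall>t\<ge>0. eventually (\<lambda>s. X s \<omega> = X t \<omega>) (at_right t))
   \<and> (\<forall>\<omega>\<in>space M. \<forall>t\<ge>0.
        L t \<omega> = L 0 \<omega> + (\<Sum>j\<in>{1..N}. measure lborel {s\<in>{0..t}. X s \<omega> = j} *\<^sub>R v j))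
   \<and> (\<forall>f. test_fun N f \<longrightarrow>
        (\<forall>s t. 0 \<le> s \<and> s \<le> t \<longrightarrow>
          (let h = (\<lambda>\<omega>. f (X t \<omega>) (L t \<omega>) - f (X s \<omega>) (L s \<omega>)
                       - (LINT u:{s..t}|lborel. gen N v a f (X u \<omega>) (L u \<omega>)))
           in integrable M h \<and> (\<forall>A\<in>sets (F s). (LINT \<omega>:A|M. h \<omega>) = 0))))"

definition harris_irreducible ::
  "nat \<Rightarrow> (nat \<Rightarrow> 'a::euclidean_space) \<Rightarrow> (nat \<Rightarrow> nat \<Rightarrow> 'a \<Rightarrow> real) \<Rightarrow> 'w itself \<Rightarrow> bool"
where
  "harris_irreducible N v a (_::'w itself) \<longleftrightarrow>
     (\<exists>U j0. open U \<and> j0 \<in> {1..N} \<and>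
        (\<forall>(M::'w measure) F X L j l.
            pdmp_solution N v a M F X L \<and> j \<in> {1..N}
            \<and> (\<forall>\<omega>\<in>space M. X 0 \<omega> = j \<and> L 0 \<omega> = l)
          \<longrightarrow> (\<exists>t>0. measure M {\<omega>\<in>space M. X t \<omega> = j0 \<and> L t \<omega> \<in> U} > 0)))"

definition invariant_law ::
  "nat \<Rightarrow> (nat \<Rightarrow> 'a::euclidean_space) \<Rightarrow> (nat \<Rightarrow> nat \<Rightarrow> 'a \<Rightarrow> real) \<Rightarrow> 'w itself
   \<Rightarrow> (nat \<Rightarrow> real) \<Rightarrow> ('a \<Rightarrow> real) \<Rightarrow> bool"
where
  "invariant_law N v a (_::'w itself) p g \<longleftrightarrow>
     (\<exists>(M::'w measure) F X L. pdmp_solution N v a M F X L \<and>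
        (\<forall>t\<ge>0. \<forall>j\<in>{1..N}. \<forall>B\<in>sets borel.
           measure M {\<omega>\<in>space M. X t \<omega> = j \<and> L t \<omega> \<in> B} = p j * (LINT l:B|lborel. g l)))"

end

theory Submission
  imports Defs
begin

definition dyad :: "nat \<Rightarrow> real \<Rightarrow> real" where
  "dyad n s = max 0 ((of_int \<lfloor>s * 2^n\<rfloor> + 1) / 2^n)"

lemma dyad_bounds:
  assumes "s \<ge> 0" shows "s < dyad n s" "dyad n s \<le> s + 1 / 2^n"
proof -
  have p: "(0::real) < 2^n" by simp
  have a: "s * 2^n < of_int \<lfloor>s * 2^n\<rfloor> + 1" by linarith
  have b: "of_int \<lfloor>s * 2^n\<rfloor> \<le> s * 2^n" by linarith
  have c: "0 \<le> (of_int \<lfloor>s * 2^n\<rfloor> + 1) / (2::real)^n"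
    using assms by (simp add: add_nonneg_nonneg)
  have "s < (of_int \<lfloor>s * 2^n\<rfloor> + 1) / 2^n" using a p by (simp add: field_simps)
  then show "s < dyad n s" unfolding dyad_def by simp
  have "(of_int \<lfloor>s * 2^n\<rfloor> + 1) / 2^n \<le> s + 1 / 2^n" using b p by (simp add: field_simps)
  then show "dyad n s \<le> s + 1 / 2^n" unfolding dyad_def using c by simp
qed

lemma dyad_eventually:
  assumes "s \<ge> 0" "eventually P (at_right s)"
  shows "\<exists>N. \<forall>n\<ge>N. P (dyad n s)"
proof -
  obtain b where b: "b > s" "\<And>y. y > s \<Longrightarrow> y < b \<Longrightarrow> P y"
    using assms(2) eventually_at_right[of s "s+1"] by auto
  obtain N where N: "(1/2::real)^N < b - s"
    using real_arch_pow_inv[of "b - s" "1/2"] b(1) by auto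
  have "P (dyad n s)" if "n \<ge> N" for n
  proof (rule b(2))
    show "s < dyad n s" using dyad_bounds[OF assms(1)] by simp
    have "(1/2::real)^n \<le> (1/2)^N" using that by (simp add: power_decreasing)
    then have "1/(2::real)^n < b - s" using N by (simp add: power_one_over)
    then show "dyad n s < b" using dyad_bounds(2)[OF assms(1), of n] by linarith
  qed
  then show ?thesis by blast
qed

lemma dyad_meas:
  fixes X :: "real \<Rightarrow> 'w \<Rightarrow> 'c"
  assumes "\<And>t. t \<ge> 0 \<Longrightarrow> X t \<in> measurable M (count_space UNIV)"
  shows "(\<lambda>x. X (dyad n (snd x)) (fst x)) \<in> measurable (M \<Otimes>\<^sub>M (lborel::real measure)) (count_space UNIV)"
proof -
  have A: "(\<lambda>x. X (max 0 ((of_int i + 1) / 2^n)) (fst x)) \<in> measurable (M \<Otimes>\<^sub>M (lborel::real measure)) (count_space UNIV)" for i :: int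
  proof -
    have "X (max 0 ((of_int i + 1) / 2^n)) \<in> measurable M (count_space UNIV)" by (rule assms) simp
    then show ?thesis by (rule measurable_compose[OF measurable_fst])
  qed
  have B: "(\<lambda>x. \<lfloor>snd x * 2 ^ n\<rfloor>) \<in> measurable (M \<Otimes>\<^sub>M (lborel::real measure)) (count_space UNIV)"
    by measurable
  show ?thesis using measurable_compose_countable[OF A B] unfolding dyad_def by simp
qed

lemma joint_meas:
  fixes X :: "real \<Rightarrow> 'w \<Rightarrow> 'c"
  assumes "\<And>t. t \<ge> 0 \<Longrightarrow> X t \<in> measurable M (count_space UNIV)"
   and "\<forall>\<omega>\<in>space M. \<forall>t\<ge>0. eventually (\<lambda>s. X s \<omega> = X t \<omega>) (at_right t)"
  shows "{x \<in> space (M \<Otimes>\<^sub>M (lborel::real measure)). snd x \<in> {0..1} \<and> X (snd x) (fst x) = j} \<in> sets (M \<Otimes>\<^sub>M (lborel::real measure))"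
proof -
  have eq: "{x \<in> space (M \<Otimes>\<^sub>M (lborel::real measure)). snd x \<in> {0..1} \<and> X (snd x) (fst x) = j}
     = {x \<in> space (M \<Otimes>\<^sub>M (lborel::real measure)). snd x \<in> {0..1} \<and> (\<exists>N::nat. \<forall>n\<in>{N..}. X (dyad n (snd x)) (fst x) = j)}"
  proof (intro Collect_cong conj_cong refl)
    fix x assume x: "x \<in> space (M \<Otimes>\<^sub>M (lborel::real measure))" and s: "snd x \<in> {0..1}"
    then have om: "fst x \<in> space M" by (auto simp: space_pair_measure)
    obtain N where N: "\<And>n. n \<ge> N \<Longrightarrow> X (dyad n (snd x)) (fst x) = X (snd x) (fst x)"
      using dyad_eventually[of "snd x"] assms(2) om s by fastforce
    show "X (snd x) (fst x) = j \<longleftrightarrow> (\<exists>N::nat. \<forall>n\<in>{N..}. X (dyad n (snd x)) (fst x) = j)"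
    proof
      assume "X (snd x) (fst x) = j" then show "\<exists>N::nat. \<forall>n\<in>{N..}. X (dyad n (snd x)) (fst x) = j"
        using N by auto
    next
      assume "\<exists>N::nat. \<forall>n\<in>{N..}. X (dyad n (snd x)) (fst x) = j"
      then obtain N' where "\<forall>n\<in>{N'..}. X (dyad n (snd x)) (fst x) = j" by blast
      then show "X (snd x) (fst x) = j" using N[of "max N N'"] by auto
    qed
  qed
  have [measurable]: "\<And>n. (\<lambda>x. X (dyad n (snd x)) (fst x)) \<in> measurable (M \<Otimes>\<^sub>M (lborel::real measure)) (count_space UNIV)"
    using dyad_meas assms(1) by blast
  show ?thesis unfolding eq by measurable
qed

definition clamp :: "nat \<Rightarrow> real \<Rightarrow> real" where
  "clamp n x = max (- real n) (min (real n) x)"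

lemma clamp_meas[measurable]: "clamp n \<in> borel_measurable borel"
  unfolding clamp_def by measurable

lemma stationary_increment:
  fixes Y0 Y1 :: "'w \<Rightarrow> real"
  assumes P: "prob_space M" and m0[measurable]: "Y0 \<in> borel_measurable M"
    and m1[measurable]: "Y1 \<in> borel_measurable M"
    and D: "distr M borel Y0 = distr M borel Y1"
    and C: "\<And>\<omega>. \<omega> \<in> space M \<Longrightarrow> \<bar>Y1 \<omega> - Y0 \<omega>\<bar> \<le> C"
  shows "integral\<^sup>L M (\<lambda>\<omega>. Y1 \<omega> - Y0 \<omega>) = 0"
proof -
  interpret prob_space M by (rule P)
  define s where "s n \<omega> = clamp n (Y1 \<omega>) - clamp n (Y0 \<omega>)" for n \<omega>
  have int_cl: "integrable M (\<lambda>\<omega>. clamp n (Y \<omega>))" if [measurable]: "Y \<in> borel_measurable M" for Y n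
    by (rule integrable_const_bound[where B="real n"]) (auto simp: clamp_def)
  have zero: "integral\<^sup>L M (s n) = 0" for n
  proof -
    have "integral\<^sup>L M (\<lambda>\<omega>. clamp n (Y1 \<omega>)) = integral\<^sup>L (distr M borel Y1) (clamp n)"
      by (simp add: integral_distr)
    also have "\<dots> = integral\<^sup>L (distr M borel Y0) (clamp n)" using D by simp
    also have "\<dots> = integral\<^sup>L M (\<lambda>\<omega>. clamp n (Y0 \<omega>))"
      by (simp add: integral_distr)
    finally show ?thesis unfolding s_def
      by (simp add: Bochner_Integration.integral_diff[OF int_cl[OF m1] int_cl[OF m0]])
  qed
  have "(\<lambda>n. integral\<^sup>L M (s n)) \<longlonglongrightarrow> integral\<^sup>L M (\<lambda>\<omega>. Y1 \<omega> - Y0 \<omega>)"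
  proof (rule integral_dominated_convergence[where w="\<lambda>_. C"])
    show "(\<lambda>\<omega>. Y1 \<omega> - Y0 \<omega>) \<in> borel_measurable M" by measurable
    show "s n \<in> borel_measurable M" for n unfolding s_def by measurable
    show "integrable M (\<lambda>_. C)" by simp
    show "AE x in M. (\<lambda>i. s i x) \<longlonglongrightarrow> Y1 x - Y0 x"
    proof (rule AE_I2)
      fix x
      have "eventually (\<lambda>n. s n x = Y1 x - Y0 x) sequentially"
        unfolding eventually_sequentially
      proof (intro exI allI impI)
        fix n assume "nat \<lceil>max \<bar>Y1 x\<bar> \<bar>Y0 x\<bar>\<rceil> \<le> n"
        then have "max \<bar>Y1 x\<bar> \<bar>Y0 x\<bar> \<le> real n" by linarith
        then show "s n x = Y1 x - Y0 x" unfolding s_def clamp_def by auto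
      qed
      then show "(\<lambda>i. s i x) \<longlonglongrightarrow> Y1 x - Y0 x" by (rule tendsto_eventually)
    qed
    show "AE x in M. norm (s n x) \<le> C" for n
    proof (rule AE_I2)
      fix x assume "x \<in> space M"
      then have "\<bar>Y1 x - Y0 x\<bar> \<le> C" by (rule C)
      moreover have "\<bar>s n x\<bar> \<le> \<bar>Y1 x - Y0 x\<bar>" unfolding s_def clamp_def by auto
      ultimately show "norm (s n x) \<le> C" by simp
    qed
  qed
  then show ?thesis using zero LIMSEQ_unique by (simp add: LIMSEQ_const_iff)
qed


theorem corollary2p2:
  fixes N :: nat and v :: "nat \<Rightarrow> 'a::euclidean_space"
    and a :: "nat \<Rightarrow> nat \<Rightarrow> 'a \<Rightarrow> real"
    and p :: "nat \<Rightarrow> real" and g :: "'a \<Rightarrow> real"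
  assumes "N > 1"
    and "\<exists>j\<in>{1..N}. v j \<noteq> 0"
    and "dim (v ` {1..N}) = DIM('a)"
    and "\<forall>i\<in>{1..N}. \<forall>j\<in>{1..N}. i \<noteq> j \<longrightarrow> continuous_on UNIV (a i j) \<and> (\<forall>l. a i j l \<ge> 0)"
    and "harris_irreducible N v a TYPE('w)"
    and "\<forall>j\<in>{1..N}. p j > 0"
    and "(\<Sum>j\<in>{1..N}. p j) = 1"
    and "\<forall>l. g l \<ge> 0"
    and "\<forall>l. g differentiable (at l)"
    and "integrable lborel g"
    and "(LINT l|lborel. g l) = 1"
    and "invariant_law N v a TYPE('w) p g"
  shows "(\<Sum>j\<in>{1..N}. p j *\<^sub>R v j) = 0"
proof -
  obtain M :: "'w measure" and F X L where sol: "pdmp_solution N v a M F X L"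
    and inv: "\<forall>t\<ge>0. \<forall>j\<in>{1..N}. \<forall>B\<in>sets borel.
           measure M {\<omega>\<in>space M. X t \<omega> = j \<and> L t \<omega> \<in> B} = p j * (LINT l:B|lborel. g l)"
    using assms(12) unfolding invariant_law_def by blast
  note S0 = sol[unfolded pdmp_solution_def]
  have P: "prob_space M"
    using S0 by (elim conjE)
  have A2: "\<forall>t\<ge>0. subalgebra M (F t)"
    using S0 by (elim conjE)
  have A4: "\<forall>t\<ge>0. X t \<in> measurable (F t) (count_space UNIV) \<and> L t \<in> borel_measurable (F t)"
    using S0 by (elim conjE)
  have A5: "\<forall>\<omega>\<in>space M. \<forall>t\<ge>0. X t \<omega> \<in> {1..N}"
    using S0 by (elim conjE)
  have rc: "\<forall>\<omega>\<in>space M. \<forall>t\<ge>0. eventually (\<lambda>s. X s \<omega> = X t \<omega>) (at_right t)"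
    using S0 by (elim conjE)
  have A7: "\<forall>\<omega>\<in>space M. \<forall>t\<ge>0. L t \<omega> = L 0 \<omega> + (\<Sum>j\<in>{1..N}. measure lborel {s\<in>{0..t}. X s \<omega> = j} *\<^sub>R v j)"
    using S0 by (elim conjE)
  have sub: "\<And>t. t \<ge> 0 \<Longrightarrow> subalgebra M (F t)"
    and XF: "\<And>t. t \<ge> 0 \<Longrightarrow> X t \<in> measurable (F t) (count_space UNIV)"
    and LF: "\<And>t. t \<ge> 0 \<Longrightarrow> L t \<in> borel_measurable (F t)"
    and Xr: "\<And>\<omega> t. \<omega> \<in> space M \<Longrightarrow> t \<ge> 0 \<Longrightarrow> X t \<omega> \<in> {1..N}"
    and path: "\<And>\<omega> t. \<omega> \<in> space M \<Longrightarrow> t \<ge> 0 \<Longrightarrow>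
        L t \<omega> = L 0 \<omega> + (\<Sum>j\<in>{1..N}. measure lborel {s\<in>{0..t}. X s \<omega> = j} *\<^sub>R v j)"
    using A2 A4 A5 A7 by blast+
  interpret prob_space M by (rule P)
  have XM: "X t \<in> measurable M (count_space UNIV)" if "t \<ge> 0" for t
    using measurable_from_subalg[OF sub XF] that by blast
  have LM: "L t \<in> borel_measurable M" if "t \<ge> 0" for t
    using measurable_from_subalg[OF sub LF] that by blast
  define w where "w = (\<Sum>j\<in>{1..N}. p j *\<^sub>R v j)"
  define E where "E j \<omega> = {s\<in>{0..1::real}. X s \<omega> = j}" for j \<omega>
  define Leb where "Leb j \<omega> = measure lborel (E j \<omega>)" for j \<omega>
  define S where "S j = {x \<in> space (M \<Otimes>\<^sub>M (lborel::real measure)). snd x \<in> {0..1} \<and> X (snd x) (fst x) = j}" for j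
  have Ssets: "S j \<in> sets (M \<Otimes>\<^sub>M (lborel::real measure))" for j
    unfolding S_def by (rule joint_meas[OF XM rc])
  have PS: "pair_sigma_finite M (lborel::real measure)"
    by (simp add: pair_sigma_finite_def sigma_finite_lborel prob_space_imp_sigma_finite P)
  have Esets: "E j \<omega> \<in> sets lborel" if "\<omega> \<in> space M" for j \<omega>
  proof -
    have "Pair \<omega> -` S j \<inter> space lborel \<in> sets lborel"
      by (rule measurable_sets[OF measurable_Pair1'[OF that] Ssets])
    moreover have "Pair \<omega> -` S j \<inter> space lborel = E j \<omega>"
      using that by (auto simp: S_def E_def space_pair_measure)
    ultimately show ?thesis by simp
  qed
  have inner_eq: "(\<integral>\<^sup>+y. indicator (S j) (\<omega>, y) \<partial>lborel) = emeasure lborel (E j \<omega>)" if "\<omega> \<in> space M" for j \<omega>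
  proof -
    have "indicator (S j) (\<omega>, y) = (indicator (E j \<omega>) y :: ennreal)" for y
      using that by (simp add: S_def E_def space_pair_measure split: split_indicator)
    then show ?thesis using Esets[OF that] by simp
  qed
  have intg1: "(LINT l:UNIV|lborel. g l) = 1"
    using assms(11) by (simp add: set_lebesgue_integral_def)
  have probj: "emeasure M {\<omega>\<in>space M. X t \<omega> = j} = ennreal (p j)" if "t \<ge> 0" "j \<in> {1..N}" for t j
  proof -
    have "measure M {\<omega>\<in>space M. X t \<omega> = j \<and> L t \<omega> \<in> UNIV} = p j * (LINT l:UNIV|lborel. g l)"
      by (rule inv[rule_format, OF that]) simp
    then have "measure M {\<omega>\<in>space M. X t \<omega> = j} = p j" by (simp only: intg1 UNIV_I simp_thms mult_1_right)
    then show ?thesis by (simp add: emeasure_eq_measure)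
  qed
  have NN: "(\<integral>\<^sup>+\<omega>. emeasure lborel (E j \<omega>) \<partial>M) = ennreal (p j)" if j: "j \<in> {1..N}" for j
  proof -
    have pw: "(\<integral>\<^sup>+\<omega>. indicator (S j) (\<omega>, y) \<partial>M) = ennreal (p j) * indicator {0..1::real} y" for y :: real
    proof (cases "y \<in> {0..1}")
      case True
      have [measurable]: "X y \<in> measurable M (count_space UNIV)" using XM True by simp
      have "(\<integral>\<^sup>+\<omega>. indicator (S j) (\<omega>, y) \<partial>M) = (\<integral>\<^sup>+\<omega>. indicator {\<omega>\<in>space M. X y \<omega> = j} \<omega> \<partial>M)"
        by (rule nn_integral_cong) (use True in \<open>simp add: S_def space_pair_measure split: split_indicator\<close>)
      also have "\<dots> = emeasure M {\<omega>\<in>space M. X y \<omega> = j}"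
        by (rule nn_integral_indicator) measurable
      also have "\<dots> = ennreal (p j)" using probj[of y j] True j by simp
      finally show ?thesis using True by simp
    next
      case False
      then have "indicator (S j) (\<omega>, y) = (0::ennreal)" for \<omega>
        by (auto simp add: S_def split: split_indicator)
      then show ?thesis using False by simp
    qed
    have "(\<integral>\<^sup>+\<omega>. emeasure lborel (E j \<omega>) \<partial>M) = (\<integral>\<^sup>+\<omega>. (\<integral>\<^sup>+y. indicator (S j) (\<omega>, y) \<partial>lborel) \<partial>M)"
      by (rule nn_integral_cong) (simp add: inner_eq)
    also have "\<dots> = (\<integral>\<^sup>+y. (\<integral>\<^sup>+\<omega>. indicator (S j) (\<omega>, y) \<partial>M) \<partial>lborel)"
      using pair_sigma_finite.Fubini[OF PS borel_measurable_indicator[OF Ssets]] by simp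
    also have "\<dots> = (\<integral>\<^sup>+y. ennreal (p j) * indicator {0..1::real} y \<partial>lborel)"
      by (rule nn_integral_cong) (rule pw)
    also have "\<dots> = ennreal (p j)"
      by (simp add: nn_integral_cmult_indicator)
    finally show ?thesis .
  qed
  have Emeas_fin: "emeasure lborel (E j \<omega>) = ennreal (Leb j \<omega>)" for j \<omega>
  proof -
    have "emeasure lborel (E j \<omega>) \<le> emeasure lborel {0..1::real}"
      by (rule emeasure_mono) (auto simp: E_def)
    then have "emeasure lborel (E j \<omega>) \<noteq> \<infinity>" by (auto simp: top_unique)
    then show ?thesis unfolding Leb_def using emeasure_eq_ennreal_measure[of lborel "E j \<omega>"] by (simp add: top_unique)
  qed
  have Leb_bd: "0 \<le> Leb j \<omega> \<and> Leb j \<omega> \<le> 1" for j \<omega>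
  proof -
    have "emeasure lborel (E j \<omega>) \<le> emeasure lborel {0..1::real}"
      by (rule emeasure_mono) (auto simp: E_def)
    then have "ennreal (Leb j \<omega>) \<le> ennreal 1" using Emeas_fin by simp
    then show ?thesis by (simp add: Leb_def)
  qed
  have Leb_meas: "Leb j \<in> borel_measurable M" for j
  proof -
    have IM: "(indicator (S j) :: _ \<Rightarrow> ennreal) \<in> borel_measurable (M \<Otimes>\<^sub>M (lborel::real measure))"
      by (rule borel_measurable_indicator[OF Ssets])
    have "(\<lambda>\<omega>. \<integral>\<^sup>+y. indicator (S j) (\<omega>, y) \<partial>lborel) \<in> borel_measurable M"
      using IM sigma_finite_measure.borel_measurable_nn_integral[OF sigma_finite_lborel, of "\<lambda>x y. indicator (S j) (x, y)" M] by simp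
    then have "(\<lambda>\<omega>. enn2real (\<integral>\<^sup>+y. indicator (S j) (\<omega>, y) \<partial>lborel)) \<in> borel_measurable M"
      by measurable
    then show ?thesis
      by (rule measurable_cong[THEN iffD1, rotated]) (simp add: inner_eq Emeas_fin Leb_bd)
  qed
  have Leb_int: "integrable M (Leb j)" for j
    by (rule integrable_const_bound[where B=1]) (use Leb_bd Leb_meas in auto)
  have Leb_E: "integral\<^sup>L M (Leb j) = p j" if "j \<in> {1..N}" for j
  proof -
    have "integral\<^sup>L M (Leb j) = enn2real (\<integral>\<^sup>+\<omega>. ennreal (Leb j \<omega>) \<partial>M)"
      by (rule integral_eq_nn_integral) (use Leb_meas Leb_bd in auto)
    also have "\<dots> = enn2real (\<integral>\<^sup>+\<omega>. emeasure lborel (E j \<omega>) \<partial>M)" by (simp add: Emeas_fin)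
    also have "\<dots> = p j" using NN[OF that] assms(6) that by simp
    finally show ?thesis .
  qed
  define Y0 where "Y0 \<omega> = inner (L 0 \<omega>) w" for \<omega>
  define Y1 where "Y1 \<omega> = inner (L 1 \<omega>) w" for \<omega>
  have Zeq: "Y1 \<omega> - Y0 \<omega> = (\<Sum>j\<in>{1..N}. Leb j \<omega> * inner (v j) w)" if "\<omega> \<in> space M" for \<omega>
  proof -
    have "L 1 \<omega> = L 0 \<omega> + (\<Sum>j\<in>{1..N}. Leb j \<omega> *\<^sub>R v j)"
      using path[OF that, of 1] by (simp add: Leb_def E_def)
    then show ?thesis unfolding Y0_def Y1_def by (simp add: inner_sum_left algebra_simps)
  qed
  have EZ: "integral\<^sup>L M (\<lambda>\<omega>. Y1 \<omega> - Y0 \<omega>) = inner w w"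
  proof -
    have "integral\<^sup>L M (\<lambda>\<omega>. Y1 \<omega> - Y0 \<omega>) = integral\<^sup>L M (\<lambda>\<omega>. \<Sum>j\<in>{1..N}. Leb j \<omega> * inner (v j) w)"
      by (rule Bochner_Integration.integral_cong) (simp_all add: Zeq)
    also have "\<dots> = (\<Sum>j\<in>{1..N}. integral\<^sup>L M (Leb j) * inner (v j) w)"
      by (subst Bochner_Integration.integral_sum) (auto intro: Leb_int)
    also have "\<dots> = (\<Sum>j\<in>{1..N}. p j * inner (v j) w)"
      by (rule sum.cong) (simp_all add: Leb_E)
    also have "\<dots> = inner w w" unfolding w_def by (simp add: inner_sum_left)
    finally show ?thesis .
  qed
  have distrL: "distr M borel (L t) = distr M borel (L 0)" if "t \<ge> 0" for t
  proof -
    have key: "emeasure M (L s -` A \<inter> space M) = ennreal (\<Sum>j\<in>{1..N}. p j * (LINT l:A|lborel. g l))"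
      if "s \<ge> 0" "A \<in> sets borel" for s A
    proof -
      have [measurable]: "X s \<in> measurable M (count_space UNIV)" "L s \<in> borel_measurable M"
        using XM LM that by auto
      have "L s -` A \<inter> space M = (\<Union>j\<in>{1..N}. {\<omega>\<in>space M. X s \<omega> = j \<and> L s \<omega> \<in> A})"
        using Xr that by auto
      then have "measure M (L s -` A \<inter> space M) = measure M (\<Union>j\<in>{1..N}. {\<omega>\<in>space M. X s \<omega> = j \<and> L s \<omega> \<in> A})"
        by simp
      also have "\<dots> = (\<Sum>j\<in>{1..N}. measure M {\<omega>\<in>space M. X s \<omega> = j \<and> L s \<omega> \<in> A})"
        by (rule measure_finite_Union) (use that in \<open>auto simp: disjoint_family_on_def\<close>)
      also have "\<dots> = (\<Sum>j\<in>{1..N}. p j * (LINT l:A|lborel. g l))"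
        by (rule sum.cong) (use inv that in auto)
      finally show ?thesis by (simp add: emeasure_eq_measure)
    qed
    show ?thesis
    proof (rule measure_eqI)
      fix A assume "A \<in> sets (distr M borel (L t))"
      then have A: "A \<in> sets borel" by simp
      show "emeasure (distr M borel (L t)) A = emeasure (distr M borel (L 0)) A"
        using key[OF that A] key[of 0 A] A LM[OF that] LM[of 0] by (simp add: emeasure_distr)
    qed simp
  qed
  have inner_meas: "(\<lambda>l. inner l w) \<in> borel_measurable borel" by measurable
  have D: "distr M borel Y0 = distr M borel Y1"
  proof -
    have "distr M borel Y0 = distr (distr M borel (L 0)) borel (\<lambda>l. inner l w)"
      using LM[of 0] inner_meas by (simp add: distr_distr comp_def Y0_def[abs_def])
    also have "\<dots> = distr (distr M borel (L 1)) borel (\<lambda>l. inner l w)" using distrL[of 1] by simp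
    also have "\<dots> = distr M borel Y1"
      using LM[of 1] inner_meas by (simp add: distr_distr comp_def Y1_def[abs_def])
    finally show ?thesis .
  qed
  have Y0m: "Y0 \<in> borel_measurable M" unfolding Y0_def
    using measurable_compose[OF LM[of 0] inner_meas] by simp
  have Y1m: "Y1 \<in> borel_measurable M" unfolding Y1_def
    using measurable_compose[OF LM[of 1] inner_meas] by simp
  have bound: "\<bar>Y1 \<omega> - Y0 \<omega>\<bar> \<le> (\<Sum>j\<in>{1..N}. \<bar>inner (v j) w\<bar>)" if "\<omega> \<in> space M" for \<omega>
  proof -
    have "\<bar>Y1 \<omega> - Y0 \<omega>\<bar> \<le> (\<Sum>j\<in>{1..N}. \<bar>Leb j \<omega> * inner (v j) w\<bar>)"
      unfolding Zeq[OF that] by (rule sum_abs)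
    also have "\<dots> \<le> (\<Sum>j\<in>{1..N}. \<bar>inner (v j) w\<bar>)"
    proof (rule sum_mono)
      fix j
      have "\<bar>Leb j \<omega>\<bar> \<le> 1" using Leb_bd[of j \<omega>] by simp
      then show "\<bar>Leb j \<omega> * inner (v j) w\<bar> \<le> \<bar>inner (v j) w\<bar>"
        by (simp add: abs_mult mult_left_le_one_le)
    qed
    finally show ?thesis .
  qed
  have "integral\<^sup>L M (\<lambda>\<omega>. Y1 \<omega> - Y0 \<omega>) = 0"
    by (rule stationary_increment[OF P Y0m Y1m D bound])
  then have "inner w w = 0" using EZ by simp
  then show ?thesis unfolding w_def by simp
qed

end
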